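(* Let $n,l\in\mathbb{N}^*$ and let $\beta\in\mathcal B_n$ be a braid whose closure is a knot. Let $Q(\beta)$ be its quantum representation on $(\mathbf V^l)^{\otimes n}$. Then \[ \operatorname{Tr}\big(Q(\beta)K^{-1},S_{n,l}\big)=\operatorname{Tr}\big(Q(\beta)K^{-1},\mathcal S^l\big). \]
   Context: Let $\mathcal{R}=\mathbb{Z}[s^{\pm1},q^{\pm1}]$, $s=q^{\alpha}$; $[i]_q=\frac{q^i-q^{-i}}{q-q^{-1}}$, $[k]_q!=\prod_{i\le k}[i]_q$, $\binom{k}{j}_q=\frac{[k]_q!}{[k-j]_q![j]_q!}$. The Verma module $V^s$ is free over $\mathcal R$ with basis $v_0,v_1,\dots$ and operators $Kv_j=sq^{-2j}v_j$, $Ev_j=v_{j-1}$ ($v_{-1}=0$), $F^{(m)}v_j=\binom{m+j}{j}_q\prod_{k=0}^{m-1}(sq^{-k-j}-s^{-1}q^{j+k})v_{j+m}$. Let $\mathrm{R}=q^{-\alpha^2/2}\,T\circ q^{H\otimes H/2}\circ\sum_{m\ge0}q^{m(m-1)/2}E^m\otimes F^{(m)}$ on $V^s\otimes V^s$, with $q^{H\otimes H/2}(v_i\otimes v_j)=q^{(\alpha-2i)(\alpha-2j)/2}v_i\otimes v_j$ and $T$ the flip; $Q(\sigma_i)=\mathrm{id}^{\otimes(i-1)}\otimes\mathrm R\otimes\mathrm{id}^{\otimes(n-i-1)}$ defines a representation $Q$ of the braid group $\mathcal B_n$ on $(V^s)^{\otimes n}$, and $K$ acts by $K^{\otimes n}$.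 Let $\mathbf V^l=V^s\otimes_{s\mapsto q^l}\mathbb{Z}[q^{\pm1}]$ with the specialized operators. $S_{n,l}\subset(\mathbf V^l)^{\otimes n}$ is the span of the vectors $v_{i_1}\otimes\cdots\otimes v_{i_n}$ with $\sum_j i_j\le nl$ (the sum of the weight spaces $\ker(K-q^{nl-2r})$, $0\le r\le nl$), and $\mathcal S^l=(S^l)^{\otimes n}$, where $S^l=\mathrm{span}(v_0,\dots,v_l)$, is the span of those with all $i_j\le l$; both are stable under $Q(\mathcal B_n)$ and $K$. $\operatorname{Tr}(f,Z)$ denotes the trace of $f$ restricted to $Z$. *)

theory Defs
  imports "HOL-Computational_Algebra.Formal_Laurent_Series" "Jordan_Normal_Form.Matrix"
begin

text \<open>Ground ring: Z[q,q^-1] is embedded in the field of formal Laurent series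
  over the rationals, with q the formal variable.\<close>

type_synonym lr = "rat fls"

definition qq :: lr where "qq = fls_X"

definition qint :: "nat \<Rightarrow> lr" where
  "qint i = (qq powi int i - qq powi (- int i)) / (qq - inverse qq)"

definition qfact :: "nat \<Rightarrow> lr" where
  "qfact k = (\<Prod>i\<in>{1..k}. qint i)"

definition qbinom :: "nat \<Rightarrow> nat \<Rightarrow> lr" where
  "qbinom k j = qfact k / (qfact (k - j) * qfact j)"

text \<open>Coefficient c with F^(m) v_j = c v_(j+m) in the specialized module V^l (s = q^l).\<close>
definition Fcoef :: "nat \<Rightarrow> nat \<Rightarrow> nat \<Rightarrow> lr" where
  "Fcoef l m j = qbinom (m + j) j *
     (\<Prod>k<m. qq powi (int l - int k - int j) - qq powi (int j + int k - int l))"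

text \<open>The factor q^(-alpha^2/2) q^(H tensor H/2) on v_a tensor v_b, specialized at alpha = l:
  q^(((l-2a)(l-2b) - l^2)/2); the exponent is an integer.\<close>
definition HHfactor :: "nat \<Rightarrow> nat \<Rightarrow> nat \<Rightarrow> lr" where
  "HHfactor l a b = qq powi ((( int l - 2 * int a) * (int l - 2 * int b) - (int l)^2) div 2)"

text \<open>Rcoef l (a,b) (i,j) = coefficient of v_a tensor v_b in R(v_i tensor v_j).
  R(v_i tensor v_j) = sum over m<=i of q^(m(m-1)/2) HHfactor (i-m) (j+m) F^(m)-coef
  times v_(j+m) tensor v_(i-m) (after the flip T).\<close>
definition Rcoef :: "nat \<Rightarrow> nat \<times> nat \<Rightarrow> nat \<times> nat \<Rightarrow> lr" where
  "Rcoef l ab ij = (case ab of (a, b) \<Rightarrow> case ij of (i, j) \<Rightarrow>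
     (\<Sum>m\<in>{0..i}. if a = j + m \<and> b = i - m
        then qq powi int (m * (m - 1) div 2) * HHfactor l (i - m) (j + m) * Fcoef l m j
        else 0))"

text \<open>Basis of (V^l)^(tensor n): tuples (lists of length n). Q(sigma_i), 1 <= i <= n-1,
  acts by R on tensor positions i, i+1 (list positions i-1, i).\<close>
definition sigma_coef :: "nat \<Rightarrow> nat \<Rightarrow> nat list \<Rightarrow> nat list \<Rightarrow> lr" where
  "sigma_coef l i u v =
     (if length u = length v \<and> (\<forall>k<length u. k \<noteq> i - 1 \<and> k \<noteq> i \<longrightarrow> u ! k = v ! k)
      then Rcoef l (u ! (i - 1), u ! i) (v ! (i - 1), v ! i) else 0)"

definition basisS :: "nat \<Rightarrow> nat \<Rightarrow> nat list list" where
  "basisS n l = filter (\<lambda>v. sum_list v \<le> n * l) (List.n_lists n [0..<n * l + 1])"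

definition dimS :: "nat \<Rightarrow> nat \<Rightarrow> nat" where
  "dimS n l = length (basisS n l)"

text \<open>Matrix of Q(sigma_i) restricted to the invariant subspace S_{n,l}.\<close>
definition sigma_mat :: "nat \<Rightarrow> nat \<Rightarrow> nat \<Rightarrow> lr mat" where
  "sigma_mat n l i = mat (dimS n l) (dimS n l)
     (\<lambda>(r, c). sigma_coef l i (basisS n l ! r) (basisS n l ! c))"

definition inv_mat :: "nat \<Rightarrow> lr mat \<Rightarrow> lr mat" where
  "inv_mat d A = (SOME B. B \<in> carrier_mat d d \<and> A * B = 1\<^sub>m d \<and> B * A = 1\<^sub>m d)"

text \<open>Braid words: (i, True) = sigma_i, (i, False) = sigma_i^-1.\<close>
definition valid_braid :: "nat \<Rightarrow> (nat \<times> bool) list \<Rightarrow> bool" where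
  "valid_braid n w = (\<forall>(i, e) \<in> set w. 1 \<le> i \<and> i \<le> n - 1)"

definition gen_mat :: "nat \<Rightarrow> nat \<Rightarrow> nat \<times> bool \<Rightarrow> lr mat" where
  "gen_mat n l g = (case g of (i, e) \<Rightarrow>
     if e then sigma_mat n l i else inv_mat (dimS n l) (sigma_mat n l i))"

definition Q_mat :: "nat \<Rightarrow> nat \<Rightarrow> (nat \<times> bool) list \<Rightarrow> lr mat" where
  "Q_mat n l w = foldr (\<lambda>g M. gen_mat n l g * M) w (1\<^sub>m (dimS n l))"

text \<open>K^-1 on S_{n,l}: K acts on v_{i_1} tensor ... tensor v_{i_n} by q^(n l - 2 sum i_j).\<close>
definition Kinv_mat :: "nat \<Rightarrow> nat \<Rightarrow> lr mat" where
  "Kinv_mat n l = mat (dimS n l) (dimS n l)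
     (\<lambda>(r, c). if r = c then qq powi (2 * int (sum_list (basisS n l ! r)) - int (n * l)) else 0)"

text \<open>Underlying permutation of a braid word (sigma_i swaps strands i-1 and i, 0-based).\<close>
definition braid_perm :: "(nat \<times> bool) list \<Rightarrow> nat \<Rightarrow> nat" where
  "braid_perm w = foldr (\<lambda>(i, e) f. (id(i - 1 := i, i := i - 1)) \<circ> f) w id"

text \<open>Closure is a knot: the permutation is transitive (one cycle) on the n strands.\<close>
definition closure_is_knot :: "nat \<Rightarrow> (nat \<times> bool) list \<Rightarrow> bool" where
  "closure_is_knot n w = (\<forall>a<n. \<forall>b<n. \<exists>k. (braid_perm w ^^ k) a = b)"

definition trace_on :: "nat \<Rightarrow> nat \<Rightarrow> lr mat \<Rightarrow> (nat list \<Rightarrow> bool) \<Rightarrow> lr" where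
  "trace_on n l M P = (\<Sum>r\<in>{r. r < dimS n l \<and> P (basisS n l ! r)}. M $$ (r, r))"

end

theory Submission
  imports Defs "HOL-Library.Multiset" "Jordan_Normal_Form.Determinant"
begin

definition Wset :: "nat \<Rightarrow> nat list \<Rightarrow> nat set" where
  "Wset l v = {k. k < length v \<and> l < v ! k}"

definition sw :: "nat \<Rightarrow> nat \<Rightarrow> nat" where
  "sw i = id(i - 1 := i, i := i - 1)"

definition swp :: "nat \<Rightarrow> nat list \<Rightarrow> nat list" where
  "swp i v = v[i - 1 := v ! i, i := v ! (i - 1)]"

definition supp_ok :: "nat \<Rightarrow> nat \<Rightarrow> lr mat \<Rightarrow> (nat \<Rightarrow> nat) \<Rightarrow> bool" where
  "supp_ok n l M f = (\<forall>r<dimS n l. \<forall>c<dimS n l. M $$ (r, c) \<noteq> 0 \<longrightarrow>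
      Wset l (basisS n l ! r) \<subseteq> f ` Wset l (basisS n l ! c))"

lemma basis_mem: "v \<in> set (basisS n l) \<longleftrightarrow> length v = n \<and> sum_list v \<le> n * l"
proof -
  have "sum_list v \<le> n * l \<Longrightarrow> set v \<subseteq> set [0..<n * l + 1]"
    using member_le_sum_list[of _ v] by fastforce
  then show ?thesis unfolding basisS_def by (auto simp: set_n_lists)
qed

lemma basis_distinct: "distinct (basisS n l)"
  unfolding basisS_def by (intro distinct_filter distinct_n_lists) simp

lemma basis_nth: "r < dimS n l \<Longrightarrow> length (basisS n l ! r) = n \<and> sum_list (basisS n l ! r) \<le> n * l"
  using basis_mem[of "basisS n l ! r" n l] unfolding dimS_def by auto

lemma mult_entry:
  fixes A B :: "'a::semiring_0 mat"
  assumes "A \<in> carrier_mat d d" "B \<in> carrier_mat d d" "r < d" "c < d"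
  shows "(A * B) $$ (r, c) = (\<Sum>k<d. A $$ (r, k) * B $$ (k, c))"
  using assms by (simp add: scalar_prod_def lessThan_atLeast0)

lemma qq_powi_nz: "qq powi a \<noteq> 0"
  unfolding qq_def by simp

lemma qq_nz: "qq \<noteq> 0"
  unfolding qq_def by simp

lemma qq_powi_inj: "qq powi a = qq powi b \<Longrightarrow> a = b"
proof -
  assume "qq powi a = qq powi b"
  then have "fls_subdegree (qq powi a) = fls_subdegree (qq powi b)" by simp
  then show "a = b" unfolding qq_def by simp
qed

lemma qint_nz: "i \<ge> 1 \<Longrightarrow> qint i \<noteq> 0"
proof -
  assume i: "i \<ge> 1"
  have "qq powi int i \<noteq> qq powi (- int i)" using qq_powi_inj[of "int i" "- int i"] i by auto
  then have n: "qq powi int i - qq powi (- int i) \<noteq> 0" by simp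
  have "qq powi 1 \<noteq> qq powi (-1)" using qq_powi_inj[of 1 "-1"] by auto
  then have "qq - inverse qq \<noteq> 0" by (simp add: power_int_minus)
  with n show ?thesis unfolding qint_def by simp
qed

lemma qfact_nz: "qfact k \<noteq> 0"
  unfolding qfact_def using qint_nz by (simp add: prod_zero_iff)

lemma Fcoef_0: "Fcoef l 0 j = 1"
  unfolding Fcoef_def qbinom_def using qfact_nz[of j] by (simp add: qfact_def)

lemma Fcoef_zero: assumes "j \<le> l" "l < j + m" shows "Fcoef l m j = 0"
proof -
  have "l - j \<in> {..<m}" using assms by auto
  moreover have "qq powi (int l - int (l - j) - int j) - qq powi (int j + int (l - j) - int l) = 0"
    using assms by simp
  ultimately have "(\<Prod>k<m. qq powi (int l - int k - int j) - qq powi (int j + int k - int l)) = 0"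
    by (metis (no_types, lifting) finite_lessThan prod_zero)
  then show ?thesis unfolding Fcoef_def by simp
qed

lemma dummy: True by simp
lemma sigma_nz:
  assumes "length u = n" "length v = n" "1 \<le> i" "i < n" "sigma_coef l i u v \<noteq> 0"
  shows "\<exists>m. u ! (i - 1) = v ! i + m \<and> v ! (i - 1) = u ! i + m \<and>
     (\<forall>k<n. k \<noteq> i - 1 \<and> k \<noteq> i \<longrightarrow> u ! k = v ! k) \<and> \<not> (v ! i \<le> l \<and> l < v ! i + m)"
proof -
  have oth: "\<forall>k<n. k \<noteq> i - 1 \<and> k \<noteq> i \<longrightarrow> u ! k = v ! k" and
    R: "Rcoef l (u ! (i - 1), u ! i) (v ! (i - 1), v ! i) \<noteq> 0"
  proof -
    let ?P = "length u = length v \<and> (\<forall>k<length u. k \<noteq> i - 1 \<and> k \<noteq> i \<longrightarrow> u ! k = v ! k)"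
    have P: ?P
    proof (rule ccontr)
      assume "\<not> ?P"
      then have "sigma_coef l i u v = 0" unfolding sigma_coef_def by (rule if_not_P)
      with assms(5) show False by contradiction
    qed
    then have "sigma_coef l i u v = Rcoef l (u ! (i - 1), u ! i) (v ! (i - 1), v ! i)"
      unfolding sigma_coef_def by (rule if_P)
    with assms(5) show "Rcoef l (u ! (i - 1), u ! i) (v ! (i - 1), v ! i) \<noteq> 0" by simp
    from P assms(1) show "\<forall>k<n. k \<noteq> i - 1 \<and> k \<noteq> i \<longrightarrow> u ! k = v ! k" by simp
  qed
  let ?F = "\<lambda>m. (if u ! (i - 1) = v ! i + m \<and> u ! i = v ! (i - 1) - m
        then qq powi int (m * (m - 1) div 2) * HHfactor l (v ! (i - 1) - m) (v ! i + m) * Fcoef l m (v ! i)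
        else 0)"
  from R have "(\<Sum>m\<in>{0..v ! (i - 1)}. ?F m) \<noteq> 0" unfolding Rcoef_def by (simp only: prod.case not_False_eq_True)
  then obtain m where m: "m \<in> {0..v ! (i - 1)}" and t: "?F m \<noteq> 0"
    by (rule sum.not_neutral_contains_not_neutral)
  have c: "u ! (i - 1) = v ! i + m \<and> u ! i = v ! (i - 1) - m"
  proof (rule ccontr)
    assume "\<not> (u ! (i - 1) = v ! i + m \<and> u ! i = v ! (i - 1) - m)"
    then have "?F m = 0" by (rule if_not_P)
    with t show False by contradiction
  qed
  then have "?F m = qq powi int (m * (m - 1) div 2) * HHfactor l (v ! (i - 1) - m) (v ! i + m) * Fcoef l m (v ! i)"
    by (rule if_P)
  with t have "Fcoef l m (v ! i) \<noteq> 0" by (metis mult_zero_right)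
  then have nf: "\<not> (v ! i \<le> l \<and> l < v ! i + m)" using Fcoef_zero by blast
  have m2: "m \<le> v ! (i - 1)" using m by simp
  have "v ! (i - 1) = u ! i + m" using c m2 by linarith
  with c nf oth show ?thesis by blast
qed

lemma swp_nth: "i < length v \<Longrightarrow> 1 \<le> i \<Longrightarrow> k < length v \<Longrightarrow>
   swp i v ! k = (if k = i - 1 then v ! i else if k = i then v ! (i - 1) else v ! k)"
  unfolding swp_def by (auto simp: nth_list_update)

lemma swp_len[simp]: "length (swp i v) = length v"
  unfolding swp_def by simp

lemma swp_swp: "i < length v \<Longrightarrow> 1 \<le> i \<Longrightarrow> swp i (swp i v) = v"
  by (rule nth_equalityI) (auto simp: swp_nth)

lemma swp_sum: "i < length v \<Longrightarrow> 1 \<le> i \<Longrightarrow> sum_list (swp i v) = sum_list v"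
proof -
  assume a: "i < length v" "1 \<le> i"
  then have "mset (swp i v) = mset v" unfolding swp_def
    by (intro mset_swap) auto
  then show ?thesis by (metis sum_mset_sum_list)
qed

lemma sw_simps: "1 \<le> i \<Longrightarrow> sw i (i - 1) = i" "sw i i = i - 1"
   "k \<noteq> i - 1 \<Longrightarrow> k \<noteq> i \<Longrightarrow> sw i k = k"
  unfolding sw_def by auto

lemma sw_sw: "1 \<le> i \<Longrightarrow> sw i (sw i k) = k"
  unfolding sw_def by auto

lemma Wset_swp: assumes "i < length v" "1 \<le> i" shows "Wset l (swp i v) = sw i ` Wset l v"
proof -
  have "k \<in> Wset l (swp i v) \<longleftrightarrow> sw i k \<in> Wset l v" for k
    using assms unfolding Wset_def sw_def by (auto simp: swp_nth)
  then show ?thesis using sw_sw[OF assms(2)]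
    by (metis (no_types, lifting) image_iff subsetI subset_antisym)
qed

lemma sigma_Wset:
  assumes "length u = n" "length v = n" "1 \<le> i" "i < n" "sigma_coef l i u v \<noteq> 0"
  shows "Wset l u \<subseteq> Wset l (swp i v)"
proof
  fix x assume x: "x \<in> Wset l u"
  obtain m where m: "u ! (i - 1) = v ! i + m" "v ! (i - 1) = u ! i + m"
     "\<forall>k<n. k \<noteq> i - 1 \<and> k \<noteq> i \<longrightarrow> u ! k = v ! k" "\<not> (v ! i \<le> l \<and> l < v ! i + m)"
    using sigma_nz[OF assms] by blast
  show "x \<in> Wset l (swp i v)"
    using x m assms unfolding Wset_def by (auto simp: swp_nth)
qed

lemma sigma_diag:
  assumes "length u = n" "1 \<le> i" "i < n"
  shows "sigma_coef l i u (swp i u) \<noteq> 0"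
proof -
  let ?T = "\<lambda>m. qq powi int (m * (m - 1) div 2) * HHfactor l (u ! i - m) (u ! (i - 1) + m) * Fcoef l m (u ! (i - 1))"
  have "Rcoef l (u ! (i - 1), u ! i) (u ! i, u ! (i - 1)) =
     (\<Sum>m\<in>{0..u ! i}. if m = 0 then ?T m else 0)"
    unfolding Rcoef_def prod.case by (intro sum.cong) auto
  also have "\<dots> = ?T 0" by simp
  also have "\<dots> \<noteq> 0" by (simp add: Fcoef_0 HHfactor_def qq_powi_nz qq_nz)
  finally show ?thesis using assms unfolding sigma_coef_def by (auto simp: swp_nth)
qed


lemma sum_split_pt:
  fixes g :: "nat \<Rightarrow> 'a::comm_monoid_add"
  assumes "x < d"
  shows "(\<Sum>k<d. g k) = g x + (\<Sum>k\<in>{..<d} - {x}. g k)"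
  using assms by (subst sum.remove[of "{..<d}" x]) auto

lemma inv_gen:
  fixes A :: "'a::field mat" and \<tau> \<phi> :: "nat \<Rightarrow> nat" and R :: "nat \<Rightarrow> nat \<Rightarrow> bool"
  assumes A: "A \<in> carrier_mat d d"
    and tau: "\<And>r. r < d \<Longrightarrow> \<tau> r < d \<and> \<tau> (\<tau> r) = r"
    and diag: "\<And>r. r < d \<Longrightarrow> A $$ (r, \<tau> r) \<noteq> 0"
    and off: "\<And>r k. r < d \<Longrightarrow> k < d \<Longrightarrow> A $$ (r, k) \<noteq> 0 \<Longrightarrow> k \<noteq> \<tau> r \<Longrightarrow> R r (\<tau> k) \<and> \<phi> (\<tau> k) < \<phi> r"
    and refl: "\<And>r. R r r"
    and trans: "\<And>a b c. R a b \<Longrightarrow> R b c \<Longrightarrow> R a c"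
  shows "\<exists>Y. Y \<in> carrier_mat d d \<and> A * Y = 1\<^sub>m d \<and> Y * A = 1\<^sub>m d \<and>
     (\<forall>k<d. \<forall>c<d. Y $$ (k, c) \<noteq> 0 \<longrightarrow> R (\<tau> k) c)"
proof -
  have det: "det A \<noteq> 0"
  proof
    assume "det A = 0"
    then obtain v where v: "v \<in> carrier_vec d" "v \<noteq> 0\<^sub>v d" "A *\<^sub>v v = 0\<^sub>v d"
      using det_0_iff_vec_prod_zero_field[OF A] by blast
    have row: "(\<Sum>k<d. A $$ (r, k) * v $ k) = 0" if "r < d" for r
    proof -
      have "(A *\<^sub>v v) $ r = 0" using v(3) that by simp
      then show ?thesis using A v(1) that by (simp add: scalar_prod_def lessThan_atLeast0)
    qed
    have main: "r < d \<Longrightarrow> v $ (\<tau> r) = 0" for r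
    proof (induct "\<phi> r" arbitrary: r rule: less_induct)
      case (less r)
      have z: "(\<Sum>k\<in>{..<d} - {\<tau> r}. A $$ (r, k) * v $ k) = 0"
      proof (rule sum.neutral, rule ballI)
        fix k assume k: "k \<in> {..<d} - {\<tau> r}"
        show "A $$ (r, k) * v $ k = 0"
        proof (cases "A $$ (r, k) = 0")
          case False
          with off[of r k] k less(2) have "\<phi> (\<tau> k) < \<phi> r" by auto
          with less(1)[of "\<tau> k"] tau[of k] k have "v $ k = 0" by auto
          then show ?thesis by simp
        qed simp
      qed
      have "0 = A $$ (r, \<tau> r) * v $ (\<tau> r)"
        using row[OF less(2)] sum_split_pt[of "\<tau> r" d "\<lambda>k. A $$ (r, k) * v $ k"] tau[OF less(2)] z
        by simp
      with diag[OF less(2)] show ?case by simp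
    qed
    have "v = 0\<^sub>v d"
    proof (rule eq_vecI)
      fix j assume "j < dim_vec (0\<^sub>v d)"
      then have j: "j < d" by simp
      with main[of "\<tau> j"] tau[OF j] show "v $ j = 0\<^sub>v d $ j" by simp
    next
      show "dim_vec v = dim_vec (0\<^sub>v d)" using v(1) by simp
    qed
    with v(2) show False by contradiction
  qed
  from det_non_zero_imp_unit[OF A det, of "()"]
  obtain Y where Y: "Y \<in> carrier_mat d d" "A * Y = 1\<^sub>m d" "Y * A = 1\<^sub>m d"
    unfolding Units_def ring_mat_def by auto
  have ent: "(\<Sum>k<d. A $$ (r, k) * Y $$ (k, c)) = (if r = c then 1 else 0)" if "r < d" "c < d" for r c
    using mult_entry[OF A Y(1) that] Y(2) that by simp
  have supp: "r < d \<Longrightarrow> c < d \<Longrightarrow> Y $$ (\<tau> r, c) \<noteq> 0 \<Longrightarrow> R r c" for r c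
  proof (induct "\<phi> r" arbitrary: r rule: less_induct)
    case (less r)
    show ?case
    proof (cases "r = c")
      case True then show ?thesis using refl by simp
    next
      case False
      have "(\<Sum>k<d. A $$ (r, k) * Y $$ (k, c)) = 0" using ent[OF less(2,3)] False by simp
      then have "A $$ (r, \<tau> r) * Y $$ (\<tau> r, c) + (\<Sum>k\<in>{..<d} - {\<tau> r}. A $$ (r, k) * Y $$ (k, c)) = 0"
        using sum_split_pt[of "\<tau> r" d "\<lambda>k. A $$ (r, k) * Y $$ (k, c)"] tau[OF less(2)] by simp
      moreover have "A $$ (r, \<tau> r) * Y $$ (\<tau> r, c) \<noteq> 0" using diag[OF less(2)] less(4) by simp
      ultimately have "(\<Sum>k\<in>{..<d} - {\<tau> r}. A $$ (r, k) * Y $$ (k, c)) \<noteq> 0"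
        by (metis add.right_neutral)
      then obtain k where k: "k \<in> {..<d} - {\<tau> r}" and nz: "A $$ (r, k) * Y $$ (k, c) \<noteq> 0"
        by (rule sum.not_neutral_contains_not_neutral)
      from nz have a: "A $$ (r, k) \<noteq> 0" and y: "Y $$ (k, c) \<noteq> 0" by auto
      from off[OF less(2) _ a] k have o: "R r (\<tau> k)" "\<phi> (\<tau> k) < \<phi> r" by auto
      from tau[of k] k have tk: "\<tau> k < d" "\<tau> (\<tau> k) = k" by auto
      from less(1)[OF o(2) tk(1) less(3)] y tk(2) have "R (\<tau> k) c" by simp
      with o(1) trans show ?thesis by blast
    qed
  qed
  have "\<forall>k<d. \<forall>c<d. Y $$ (k, c) \<noteq> 0 \<longrightarrow> R (\<tau> k) c"
  proof (intro allI impI)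
    fix k c assume k: "k < d" and c: "c < d" and y: "Y $$ (k, c) \<noteq> 0"
    from tau[OF k] have "\<tau> k < d" "\<tau> (\<tau> k) = k" by auto
    with supp[of "\<tau> k" c] y c show "R (\<tau> k) c" by simp
  qed
  with Y show ?thesis by blast
qed


definition idx :: "nat \<Rightarrow> nat \<Rightarrow> nat list \<Rightarrow> nat" where
  "idx n l v = (THE k. k < dimS n l \<and> basisS n l ! k = v)"

lemma idx_prop: assumes "v \<in> set (basisS n l)"
  shows "idx n l v < dimS n l \<and> basisS n l ! idx n l v = v"
proof -
  obtain k where k: "k < dimS n l" "basisS n l ! k = v"
    using assms unfolding dimS_def in_set_conv_nth by blast
  have d: "distinct (basisS n l)" by (rule basis_distinct)
  have uniq: "k' = k" if "k' < dimS n l \<and> basisS n l ! k' = v" for k'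
  proof -
    from that k have "basisS n l ! k' = basisS n l ! k" "k' < length (basisS n l)" "k < length (basisS n l)"
      unfolding dimS_def by auto
    then show ?thesis using nth_eq_iff_index_eq[OF d] by blast
  qed
  have "idx n l v = k" unfolding idx_def
  proof (rule the_equality)
    show "k < dimS n l \<and> basisS n l ! k = v" using k by simp
    fix k' assume "k' < dimS n l \<and> basisS n l ! k' = v" then show "k' = k" by (rule uniq)
  qed
  with k show ?thesis by simp
qed

lemma idx_nth: assumes r: "r < dimS n l" shows "idx n l (basisS n l ! r) = r"
proof -
  have "basisS n l ! r \<in> set (basisS n l)" using r unfolding dimS_def by simp
  from idx_prop[OF this] have "idx n l (basisS n l ! r) < dimS n l"
     "basisS n l ! idx n l (basisS n l ! r) = basisS n l ! r" by auto
  then have "idx n l (basisS n l ! r) < length (basisS n l)" "r < length (basisS n l)"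
    "basisS n l ! idx n l (basisS n l ! r) = basisS n l ! r" using r unfolding dimS_def by auto
  then show ?thesis using nth_eq_iff_index_eq[OF basis_distinct[of n l]] by blast
qed

definition tau :: "nat \<Rightarrow> nat \<Rightarrow> nat \<Rightarrow> nat \<Rightarrow> nat" where
  "tau n l i r = idx n l (swp i (basisS n l ! r))"

lemma tau_props:
  assumes "1 \<le> i" "i < n" "r < dimS n l"
  shows "tau n l i r < dimS n l \<and> basisS n l ! tau n l i r = swp i (basisS n l ! r) \<and>
    tau n l i (tau n l i r) = r"
proof -
  let ?u = "basisS n l ! r"
  have u: "length ?u = n" "sum_list ?u \<le> n * l" using basis_nth[OF assms(3)] by auto
  have m: "swp i ?u \<in> set (basisS n l)"
    using u assms swp_sum[of i ?u] by (simp add: basis_mem)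
  from idx_prop[OF m] have t: "tau n l i r < dimS n l" "basisS n l ! tau n l i r = swp i ?u"
    unfolding tau_def by auto
  have "tau n l i (tau n l i r) = idx n l (swp i (swp i ?u))"
    by (simp only: tau_def[of n l i "tau n l i r"] t(2))
  also have "\<dots> = r" using swp_swp[of i ?u] u assms idx_nth[OF assms(3)] by simp
  finally show ?thesis using t by simp
qed

lemma sigma_carrier: "sigma_mat n l i \<in> carrier_mat (dimS n l) (dimS n l)"
  unfolding sigma_mat_def by simp

lemma sigma_entry: "r < dimS n l \<Longrightarrow> c < dimS n l \<Longrightarrow>
   sigma_mat n l i $$ (r, c) = sigma_coef l i (basisS n l ! r) (basisS n l ! c)"
  unfolding sigma_mat_def by simp

lemma sw_image_image: "1 \<le> i \<Longrightarrow> sw i ` sw i ` X = X"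
  using sw_sw[of i] by (auto simp: image_iff)

lemma supp_sigma:
  assumes "1 \<le> i" "i < n"
  shows "supp_ok n l (sigma_mat n l i) (sw i)"
  unfolding supp_ok_def
proof (intro allI impI)
  fix r c assume r: "r < dimS n l" and c: "c < dimS n l" and nz: "sigma_mat n l i $$ (r, c) \<noteq> 0"
  have u: "length (basisS n l ! r) = n" "length (basisS n l ! c) = n"
    using basis_nth[OF r] basis_nth[OF c] by auto
  from nz sigma_entry[OF r c] have "sigma_coef l i (basisS n l ! r) (basisS n l ! c) \<noteq> 0" by simp
  from sigma_Wset[OF u assms this] Wset_swp[of i "basisS n l ! c" l] u assms
  show "Wset l (basisS n l ! r) \<subseteq> sw i ` Wset l (basisS n l ! c)" by simp
qed

lemma sigma_inv:
  assumes i: "1 \<le> i" "i < n"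
  shows "inv_mat (dimS n l) (sigma_mat n l i) \<in> carrier_mat (dimS n l) (dimS n l) \<and>
    supp_ok n l (inv_mat (dimS n l) (sigma_mat n l i)) (sw i)"
proof -
  let ?d = "dimS n l" and ?A = "sigma_mat n l i" and ?b = "\<lambda>r. basisS n l ! r"
  let ?R = "\<lambda>r c. Wset l (?b r) \<subseteq> Wset l (?b c)"
  have "\<exists>Y. Y \<in> carrier_mat ?d ?d \<and> ?A * Y = 1\<^sub>m ?d \<and> Y * ?A = 1\<^sub>m ?d \<and>
     (\<forall>k<?d. \<forall>c<?d. Y $$ (k, c) \<noteq> 0 \<longrightarrow> ?R (tau n l i k) c)"
  proof (rule inv_gen[where \<phi> = "\<lambda>r. ?b r ! (i - 1)"])
    show "?A \<in> carrier_mat ?d ?d" by (rule sigma_carrier)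
    show "\<And>r. r < ?d \<Longrightarrow> tau n l i r < ?d \<and> tau n l i (tau n l i r) = r"
      using tau_props[OF i] by blast
    show "\<And>r. r < ?d \<Longrightarrow> ?A $$ (r, tau n l i r) \<noteq> 0"
    proof -
      fix r assume r: "r < ?d"
      have "?A $$ (r, tau n l i r) = sigma_coef l i (?b r) (swp i (?b r))"
        using sigma_entry[OF r] tau_props[OF i r] by simp
      also have "\<dots> \<noteq> 0" using sigma_diag[OF _ i] basis_nth[OF r] by blast
      finally show "?A $$ (r, tau n l i r) \<noteq> 0" .
    qed
    show "\<And>r. ?R r r" by simp
    show "\<And>a b c. ?R a b \<Longrightarrow> ?R b c \<Longrightarrow> ?R a c" by blast
    show "\<And>r k. r < ?d \<Longrightarrow> k < ?d \<Longrightarrow> ?A $$ (r, k) \<noteq> 0 \<Longrightarrow> k \<noteq> tau n l i r \<Longrightarrow>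
        ?R r (tau n l i k) \<and> ?b (tau n l i k) ! (i - 1) < ?b r ! (i - 1)"
    proof -
      fix r k assume r: "r < ?d" and k: "k < ?d" and nz: "?A $$ (r, k) \<noteq> 0" and ne: "k \<noteq> tau n l i r"
      let ?u = "?b r" and ?v = "?b k"
      have len: "length ?u = n" "length ?v = n" using basis_nth[OF r] basis_nth[OF k] by auto
      have sc: "sigma_coef l i ?u ?v \<noteq> 0" using nz sigma_entry[OF r k] by simp
      obtain m where m: "?u ! (i - 1) = ?v ! i + m" "?v ! (i - 1) = ?u ! i + m"
        "\<forall>k<n. k \<noteq> i - 1 \<and> k \<noteq> i \<longrightarrow> ?u ! k = ?v ! k"
        using sigma_nz[OF len i sc] by blast
      have m0: "m \<noteq> 0"
      proof
        assume "m = 0"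
        then have "?v = swp i ?u" using m len i by (intro nth_equalityI) (auto simp: swp_nth)
        then have "k = tau n l i r" unfolding tau_def using idx_nth[OF k] by simp
        with ne show False by simp
      qed
      have tk: "?b (tau n l i k) = swp i ?v" using tau_props[OF i k] by simp
      have "?b (tau n l i k) ! (i - 1) = ?v ! i" using tk len i by (simp add: swp_nth)
      with m m0 have "?b (tau n l i k) ! (i - 1) < ?u ! (i - 1)" by simp
      moreover have "?R r (tau n l i k)" using sigma_Wset[OF len i sc] tk by simp
      ultimately show "?R r (tau n l i k) \<and> ?b (tau n l i k) ! (i - 1) < ?u ! (i - 1)" by simp
    qed
  qed
  then obtain Y where Y: "Y \<in> carrier_mat ?d ?d" "?A * Y = 1\<^sub>m ?d" "Y * ?A = 1\<^sub>m ?d"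
    and supp: "\<forall>k<?d. \<forall>c<?d. Y $$ (k, c) \<noteq> 0 \<longrightarrow> ?R (tau n l i k) c" by blast
  have ex: "\<exists>B. B \<in> carrier_mat ?d ?d \<and> ?A * B = 1\<^sub>m ?d \<and> B * ?A = 1\<^sub>m ?d" using Y by blast
  have B: "inv_mat ?d ?A \<in> carrier_mat ?d ?d \<and> ?A * inv_mat ?d ?A = 1\<^sub>m ?d \<and> inv_mat ?d ?A * ?A = 1\<^sub>m ?d"
    unfolding inv_mat_def by (rule someI_ex[OF ex])
  from B have Bc: "inv_mat ?d ?A \<in> carrier_mat ?d ?d" and B2: "inv_mat ?d ?A * ?A = 1\<^sub>m ?d" by auto
  have "inv_mat ?d ?A = inv_mat ?d ?A * 1\<^sub>m ?d" by (rule right_mult_one_mat[symmetric, OF Bc])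
  also have "\<dots> = inv_mat ?d ?A * (?A * Y)" using Y(2) by simp
  also have "\<dots> = (inv_mat ?d ?A * ?A) * Y" by (rule assoc_mult_mat[symmetric, OF Bc sigma_carrier Y(1)])
  also have "\<dots> = Y" using B2 Y(1) by simp
  finally have eq: "inv_mat ?d ?A = Y" .
  have "supp_ok n l Y (sw i)"
    unfolding supp_ok_def
  proof (intro allI impI)
    fix k c assume k: "k < ?d" and c: "c < ?d" and nz: "Y $$ (k, c) \<noteq> 0"
    have "Wset l (?b (tau n l i k)) \<subseteq> Wset l (?b c)" using supp k c nz by blast
    moreover have "Wset l (?b (tau n l i k)) = sw i ` Wset l (?b k)"
      using tau_props[OF i k] Wset_swp[of i "?b k" l] basis_nth[OF k] i by simp
    ultimately have "sw i ` sw i ` Wset l (?b k) \<subseteq> sw i ` Wset l (?b c)" by (simp add: image_mono)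
    then show "Wset l (?b k) \<subseteq> sw i ` Wset l (?b c)" using sw_image_image[OF i(1)] by simp
  qed
  with eq B show ?thesis by simp
qed


lemma supp_one: "supp_ok n l (1\<^sub>m (dimS n l)) id"
  unfolding supp_ok_def by (auto split: if_splits)

lemma supp_mult:
  assumes A: "A \<in> carrier_mat (dimS n l) (dimS n l)" and B: "B \<in> carrier_mat (dimS n l) (dimS n l)"
    and sA: "supp_ok n l A f" and sB: "supp_ok n l B g"
  shows "supp_ok n l (A * B) (f \<circ> g)"
  unfolding supp_ok_def
proof (intro allI impI)
  fix r c assume r: "r < dimS n l" and c: "c < dimS n l" and nz: "(A * B) $$ (r, c) \<noteq> 0"
  from nz mult_entry[OF A B r c] have "(\<Sum>k<dimS n l. A $$ (r, k) * B $$ (k, c)) \<noteq> 0" by simp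
  then obtain k where k: "k \<in> {..<dimS n l}" and t: "A $$ (r, k) * B $$ (k, c) \<noteq> 0"
    by (rule sum.not_neutral_contains_not_neutral)
  from t have a: "A $$ (r, k) \<noteq> 0" and b: "B $$ (k, c) \<noteq> 0" by auto
  from sA r k a have 1: "Wset l (basisS n l ! r) \<subseteq> f ` Wset l (basisS n l ! k)"
    unfolding supp_ok_def by auto
  from sB c k b have 2: "Wset l (basisS n l ! k) \<subseteq> g ` Wset l (basisS n l ! c)"
    unfolding supp_ok_def by auto
  from 1 2 show "Wset l (basisS n l ! r) \<subseteq> (f \<circ> g) ` Wset l (basisS n l ! c)"
    by (metis (no_types, lifting) image_comp image_mono subset_trans)
qed

lemma braid_perm_Cons: "braid_perm ((i, e) # w) = sw i \<circ> braid_perm w"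
  unfolding braid_perm_def sw_def by simp

lemma gen_props:
  assumes "1 \<le> i" "i < n"
  shows "gen_mat n l (i, e) \<in> carrier_mat (dimS n l) (dimS n l) \<and> supp_ok n l (gen_mat n l (i, e)) (sw i)"
  using sigma_inv[OF assms, of l] supp_sigma[OF assms, of l] sigma_carrier[of n l i]
  unfolding gen_mat_def by simp

lemma Q_props:
  assumes "valid_braid n w"
  shows "Q_mat n l w \<in> carrier_mat (dimS n l) (dimS n l) \<and> supp_ok n l (Q_mat n l w) (braid_perm w)"
  using assms
proof (induct w)
  case Nil
  have e: "Q_mat n l [] = 1\<^sub>m (dimS n l)" "braid_perm [] = id" unfolding Q_mat_def braid_perm_def by simp_all
  show ?case unfolding e by (rule conjI[OF one_carrier_mat supp_one])
next
  case (Cons g w)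
  obtain i e where g: "g = (i, e)" by (cases g)
  from Cons(2) g have i: "1 \<le> i" "i \<le> n - 1" and vw: "valid_braid n w" unfolding valid_braid_def by auto
  from i have i': "1 \<le> i" "i < n" by auto
  from Cons(1)[OF vw] have IH: "Q_mat n l w \<in> carrier_mat (dimS n l) (dimS n l)"
    "supp_ok n l (Q_mat n l w) (braid_perm w)" by auto
  have Q: "Q_mat n l ((i, e) # w) = gen_mat n l (i, e) * Q_mat n l w" unfolding Q_mat_def by simp
  from gen_props[OF i', of l e] have G: "gen_mat n l (i, e) \<in> carrier_mat (dimS n l) (dimS n l)"
    "supp_ok n l (gen_mat n l (i, e)) (sw i)" by auto
  have "supp_ok n l (Q_mat n l (g # w)) (braid_perm (g # w))"
    unfolding g Q braid_perm_Cons by (rule supp_mult[OF G(1) IH(1) G(2) IH(2)])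
  moreover have "Q_mat n l (g # w) \<in> carrier_mat (dimS n l) (dimS n l)" unfolding g Q using G(1) IH(1) by simp
  ultimately show ?case by simp
qed

lemma inj_sw: "inj (sw i)"
  unfolding sw_def inj_def by auto

lemma inj_braid_perm: "inj (braid_perm w)"
proof (induct w)
  case Nil then show ?case unfolding braid_perm_def by simp
next
  case (Cons g w)
  obtain i e where g: "g = (i, e)" by (cases g)
  show ?case unfolding g braid_perm_Cons by (rule inj_compose[OF inj_sw Cons])
qed

lemma diag_zero:
  assumes n: "n \<ge> 1" and vb: "valid_braid n w" and kn: "closure_is_knot n w"
    and r: "r < dimS n l" and nall: "\<not> (\<forall>x\<in>set (basisS n l ! r). x \<le> l)"
  shows "Q_mat n l w $$ (r, r) = 0"
proof (rule ccontr)
  assume nz: "Q_mat n l w $$ (r, r) \<noteq> 0"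
  let ?u = "basisS n l ! r" and ?W = "Wset l (basisS n l ! r)" and ?p = "braid_perm w"
  have u: "length ?u = n" "sum_list ?u \<le> n * l" using basis_nth[OF r] by auto
  from Q_props[OF vb, of l] nz r have sub: "?W \<subseteq> ?p ` ?W" unfolding supp_ok_def by auto
  have fin: "finite ?W" unfolding Wset_def by simp
  have "card (?p ` ?W) = card ?W" using inj_braid_perm[of w] by (simp add: card_image inj_on_subset)
  then have eq: "?p ` ?W = ?W" using sub fin by (metis card_subset_eq finite_imageI)
  have pk: "(?p ^^ k) ` ?W = ?W" for k
  proof (induct k)
    case 0 then show ?case by simp
  next
    case (Suc k)
    have "(?p ^^ Suc k) ` ?W = ?p ` ((?p ^^ k) ` ?W)" by (simp add: image_comp)
    then show ?case using Suc eq by simp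
  qed
  from nall obtain x where "x \<in> set ?u" "l < x" by auto
  then obtain a where a: "a < n" "l < ?u ! a" using u by (metis in_set_conv_nth)
  then have aW: "a \<in> ?W" unfolding Wset_def using u by simp
  have all: "l < ?u ! b" if b: "b < n" for b
  proof -
    from kn a(1) b obtain k where "(?p ^^ k) a = b" unfolding closure_is_knot_def by blast
    then have "b \<in> (?p ^^ k) ` ?W" using aW by blast
    then have "b \<in> ?W" using pk by simp
    then show ?thesis unfolding Wset_def by simp
  qed
  have "(\<Sum>k<n. Suc l) \<le> (\<Sum>k<n. ?u ! k)" by (rule sum_mono) (use all in \<open>auto simp: Suc_le_eq\<close>)
  also have "\<dots> = sum_list ?u" using u by (simp add: sum_list_sum_nth lessThan_atLeast0)
  finally have "n * Suc l \<le> n * l" using u by simp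
  with n show False by simp
qed

theorem lemma3p13:
  fixes n l :: nat and w :: "(nat \<times> bool) list"
  assumes "n \<ge> 1" and "l \<ge> 1"
    and "valid_braid n w" and "closure_is_knot n w"
  shows "trace_on n l (Q_mat n l w * Kinv_mat n l) (\<lambda>v. True)
       = trace_on n l (Q_mat n l w * Kinv_mat n l) (\<lambda>v. \<forall>x\<in>set v. x \<le> l)"
proof -
  let ?d = "dimS n l" and ?Q = "Q_mat n l w" and ?K = "Kinv_mat n l"
  have Qc: "?Q \<in> carrier_mat ?d ?d" using Q_props[OF assms(3)] by auto
  have Kc: "?K \<in> carrier_mat ?d ?d" unfolding Kinv_mat_def by simp
  have dg: "(?Q * ?K) $$ (r, r) = ?Q $$ (r, r) * ?K $$ (r, r)" if r: "r < ?d" for r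
  proof -
    have "(?Q * ?K) $$ (r, r) = (\<Sum>k<?d. ?Q $$ (r, k) * ?K $$ (k, r))" by (rule mult_entry[OF Qc Kc r r])
    also have "\<dots> = (\<Sum>k<?d. if k = r then ?Q $$ (r, r) * ?K $$ (r, r) else 0)"
      by (rule sum.cong) (use r in \<open>auto simp: Kinv_mat_def\<close>)
    also have "\<dots> = ?Q $$ (r, r) * ?K $$ (r, r)" using r by simp
    finally show ?thesis .
  qed
  have "(\<Sum>r\<in>{r. r < ?d \<and> True}. (?Q * ?K) $$ (r, r)) =
        (\<Sum>r\<in>{r. r < ?d \<and> (\<forall>x\<in>set (basisS n l ! r). x \<le> l)}. (?Q * ?K) $$ (r, r))"
  proof (rule sum.mono_neutral_right)
    show "finite {r. r < ?d \<and> True}" by simp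
    show "{r. r < ?d \<and> (\<forall>x\<in>set (basisS n l ! r). x \<le> l)} \<subseteq> {r. r < ?d \<and> True}" by auto
    show "\<forall>r\<in>{r. r < ?d \<and> True} - {r. r < ?d \<and> (\<forall>x\<in>set (basisS n l ! r). x \<le> l)}.
           (?Q * ?K) $$ (r, r) = 0"
    proof
      fix r assume "r \<in> {r. r < ?d \<and> True} - {r. r < ?d \<and> (\<forall>x\<in>set (basisS n l ! r). x \<le> l)}"
      then have r: "r < ?d" and nall: "\<not> (\<forall>x\<in>set (basisS n l ! r). x \<le> l)" by auto
      show "(?Q * ?K) $$ (r, r) = 0" using dg[OF r] diag_zero[OF assms(1,3,4) r nall] by simp
    qed
  qed
  then show ?thesis unfolding trace_on_def .
qed

end
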